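(* Let $d_0,d_1$ be metrics on $\omega$. Then the completions of $\langle\omega,d_0\rangle$ and $\langle\omega,d_1\rangle$ are homeomorphic if and only if there are metrics $d'_0,d'_1$ on $\omega$ such that $d_e\preceq_{\mathrm{di}}d'_e$ for each $e\in\{0,1\}$ and there is a Cauchy-continuous bijection $g:\langle\omega,d'_0\rangle\to\langle\omega,d'_1\rangle$ whose inverse is Cauchy-continuous.
   Context: For metrics $d,d'$ on $\omega$, $d\preceq_{\mathrm{di}}d'$ means there is a dense isometry $\iota:\langle\omega,d\rangle\to\langle\omega,d'\rangle$, i.e. a distance-preserving map (not necessarily onto) with dense image. A function between metric spaces is Cauchy-continuous if it maps Cauchy sequences to Cauchy sequences. The completion of a metric space is a complete metric space together with a dense isometry from the space into it. *)

theory Defs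
  imports "HOL-Analysis.Analysis"
begin

definition metric_on_nat :: "(nat \<Rightarrow> nat \<Rightarrow> real) \<Rightarrow> bool" where
  "metric_on_nat d \<longleftrightarrow> Metric_space UNIV d"

definition dense_isometry :: "(nat \<Rightarrow> nat \<Rightarrow> real) \<Rightarrow> 'a metric \<Rightarrow> (nat \<Rightarrow> 'a) \<Rightarrow> bool" where
  "dense_isometry d m \<iota> \<longleftrightarrow>
     range \<iota> \<subseteq> mspace m \<and>
     (\<forall>x y. mdist m (\<iota> x) (\<iota> y) = d x y) \<and>
     (mtopology_of m) closure_of (range \<iota>) = mspace m"

definition di_le :: "(nat \<Rightarrow> nat \<Rightarrow> real) \<Rightarrow> (nat \<Rightarrow> nat \<Rightarrow> real) \<Rightarrow> bool" where
  "di_le d d' \<longleftrightarrow> (\<exists>\<iota>. dense_isometry d (metric (UNIV, d')) \<iota>)"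

definition is_completion :: "(nat \<Rightarrow> nat \<Rightarrow> real) \<Rightarrow> 'a metric \<Rightarrow> (nat \<Rightarrow> 'a) \<Rightarrow> bool" where
  "is_completion d m \<iota> \<longleftrightarrow> mcomplete_of m \<and> dense_isometry d m \<iota>"

end

theory Submission
  imports Defs
begin

abbreviation MC where "MC m \<equiv> Metric_space.MCauchy (mspace m) (mdist m)"

lemma iso_MCauchy:
  assumes f: "\<And>x. x \<in> mspace m1 \<Longrightarrow> f x \<in> mspace m2"
    and iso: "\<And>x y. x \<in> mspace m1 \<Longrightarrow> y \<in> mspace m1 \<Longrightarrow> mdist m2 (f x) (f y) = mdist m1 x y"
    and s: "range \<sigma> \<subseteq> mspace m1"
  shows "MC m1 \<sigma> \<longleftrightarrow> MC m2 (f \<circ> \<sigma>)"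
  using s f iso
  by (auto simp: Metric_space.MCauchy_def[OF Metric_space_mspace_mdist] image_subset_iff)

lemma iso_Cauchy_cont:
  assumes f: "\<And>x. x \<in> mspace m1 \<Longrightarrow> f x \<in> mspace m2"
    and iso: "\<And>x y. x \<in> mspace m1 \<Longrightarrow> y \<in> mspace m1 \<Longrightarrow> mdist m2 (f x) (f y) = mdist m1 x y"
  shows "Cauchy_continuous_map m1 m2 f"
  unfolding Cauchy_continuous_map_def
proof (intro allI impI)
  fix \<sigma> assume "MC m1 \<sigma>"
  moreover then have "range \<sigma> \<subseteq> mspace m1"
    by (simp add: Metric_space.MCauchy_def[OF Metric_space_mspace_mdist])
  ultimately show "MC m2 (f \<circ> \<sigma>)" using iso_MCauchy[OF f iso] by blast
qed

lemma pullback_metric: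
  assumes "inj f" "range f \<subseteq> mspace m"
  shows "Metric_space UNIV (\<lambda>x y. mdist m (f x) (f y))"
proof
  fix x y z
  show "0 \<le> mdist m (f x) (f y)" by simp
  show "mdist m (f x) (f y) = mdist m (f y) (f x)" by (simp add: mdist_commute)
  show "(mdist m (f x) (f y) = 0) = (x = y)"
  proof -
    have "f x \<in> mspace m" "f y \<in> mspace m" using assms by auto
    then show ?thesis using assms(1) by (simp add: inj_eq)
  qed
  show "mdist m (f x) (f z) \<le> mdist m (f x) (f y) + mdist m (f y) (f z)"
    using assms by (intro mdist_triangle) auto
qed

lemma closure_metric:
  "mtopology_of m closure_of S = {x \<in> mspace m. \<forall>r>0. \<exists>y\<in>S. y \<in> mspace m \<and> mdist m x y < r}"
  unfolding mtopology_of_def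
  by (simp add: Metric_space.metric_closure_of[OF Metric_space_mspace_mdist]
         Metric_space.in_mball[OF Metric_space_mspace_mdist])
     blast

lemma dense_eq:
  assumes "continuous_map (mtopology_of m) (mtopology_of m') f"
    and "continuous_map (mtopology_of m) (mtopology_of m') g"
    and "mtopology_of m closure_of S = mspace m"
    and "\<And>x. x \<in> S \<Longrightarrow> f x = g x"
    and "x \<in> mspace m"
  shows "f x = g x"
  using assms forall_in_closure_of_eq[of x "mtopology_of m" S "mtopology_of m'" f g]
  by (simp add: mtopology_of_def Metric_space.Hausdorff_space_mtopology[OF Metric_space_mspace_mdist])


lemma di_inj:
  assumes "Metric_space UNIV d" "dense_isometry d m a"
  shows "inj a"
proof
  fix x y assume "a x = a y"
  have "a x \<in> mspace m" using assms(2) by (auto simp: dense_isometry_def)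
  then have "mdist m (a x) (a y) = 0" using \<open>a x = a y\<close> by simp
  then have "d x y = 0" using assms(2) by (simp add: dense_isometry_def)
  then show "x = y" using Metric_space.zero[OF assms(1)] by simp
qed

lemma make_F:
  assumes M: "Metric_space UNIV d" and c: "is_completion d C \<iota>" and C': "mcomplete_of C'"
    and phi: "Cauchy_continuous_map (metric(UNIV,d)) C' \<phi>"
  obtains F where "continuous_map (mtopology_of C) (mtopology_of C') F" "\<And>n. F (\<iota> n) = \<phi> n"
proof -
  interpret M: Metric_space UNIV d by fact
  have di: "dense_isometry d C \<iota>" using c by (simp add: is_completion_def)
  have inj: "inj \<iota>" by (rule di_inj[OF M di])
  have "Cauchy_continuous_map (submetric C (range \<iota>)) (metric(UNIV,d)) (inv \<iota>)"
  proof (rule iso_Cauchy_cont)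
    fix x y assume "x \<in> mspace (submetric C (range \<iota>))" "y \<in> mspace (submetric C (range \<iota>))"
    then obtain p q where "x = \<iota> p" "y = \<iota> q" by auto
    then show "mdist (metric (UNIV, d)) (inv \<iota> x) (inv \<iota> y) = mdist (submetric C (range \<iota>)) x y"
      using inj di by (simp add: dense_isometry_def)
  qed simp
  then have "Cauchy_continuous_map (submetric C (range \<iota>)) C' (\<phi> \<circ> inv \<iota>)"
    using phi Cauchy_continuous_map_compose by blast
  then obtain F where F: "continuous_map (subtopology (mtopology_of C) ((mtopology_of C) closure_of (range \<iota>)))
                        (mtopology_of C') F" "\<And>x. x \<in> range \<iota> \<Longrightarrow> F x = (\<phi> \<circ> inv \<iota>) x"
    using Cauchy_continuous_map_extends_to_continuous_closure_of C' by blast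
  have "subtopology (mtopology_of C) ((mtopology_of C) closure_of (range \<iota>)) = mtopology_of C"
    using di by (metis dense_isometry_def subtopology_topspace topspace_mtopology_of)
  then show thesis using that F inj by simp
qed

lemma make_J:
  assumes M: "Metric_space UNIV d" and M': "Metric_space UNIV d'"
    and a: "dense_isometry d (metric(UNIV,d')) a" and c: "is_completion d C \<iota>"
  obtains J where "Cauchy_continuous_map (metric(UNIV,d')) C J" "\<And>n. J (a n) = \<iota> n"
proof -
  interpret M: Metric_space UNIV d by fact
  interpret M': Metric_space UNIV d' by fact
  have di: "dense_isometry d C \<iota>" using c by (simp add: is_completion_def)
  have inj: "inj a" by (rule di_inj[OF M a])
  have "Cauchy_continuous_map (submetric (metric(UNIV,d')) (range a)) C (\<iota> \<circ> inv a)"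
  proof (rule iso_Cauchy_cont)
    fix x y assume "x \<in> mspace (submetric (metric(UNIV,d')) (range a))" "y \<in> mspace (submetric (metric(UNIV,d')) (range a))"
    then obtain p q where "x = a p" "y = a q" by auto
    then show "mdist C ((\<iota> \<circ> inv a) x) ((\<iota> \<circ> inv a) y) = mdist (submetric (metric(UNIV,d')) (range a)) x y"
      using inj di a by (simp add: dense_isometry_def)
  next
    fix x assume "x \<in> mspace (submetric (metric(UNIV,d')) (range a))"
    then show "(\<iota> \<circ> inv a) x \<in> mspace C" using di by (auto simp: dense_isometry_def)
  qed
  then obtain J where J: "Cauchy_continuous_map (submetric (metric(UNIV,d')) (mtopology_of (metric(UNIV,d')) closure_of (range a))) C J"
      "\<And>x. x \<in> range a \<Longrightarrow> J x = (\<iota> \<circ> inv a) x"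
    using Cauchy_continuous_map_extends_to_closure_of c by (metis is_completion_def)
  have "mtopology_of (metric(UNIV,d')) closure_of (range a) = UNIV"
    using a by (simp add: dense_isometry_def)
  then show thesis using that J inj by simp
qed

lemma backward:
  assumes M0: "Metric_space UNIV d0" and M1: "Metric_space UNIV d1"
    and c0: "is_completion d0 C0 \<iota>0" and c1: "is_completion d1 C1 \<iota>1"
    and N0: "Metric_space UNIV d0'" and N1: "Metric_space UNIV d1'"
    and a0: "dense_isometry d0 (metric(UNIV,d0')) a0" and a1: "dense_isometry d1 (metric(UNIV,d1')) a1"
    and g: "bij g" and g1: "Cauchy_continuous_map (metric (UNIV, d0')) (metric (UNIV, d1')) g"
    and g2: "Cauchy_continuous_map (metric (UNIV, d1')) (metric (UNIV, d0')) (inv g)"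
  shows "mtopology_of C0 homeomorphic_space mtopology_of C1"
proof -
  interpret N0: Metric_space UNIV d0' by fact
  interpret N1: Metric_space UNIV d1' by fact
  obtain J0 where J0: "Cauchy_continuous_map (metric(UNIV,d0')) C0 J0" "\<And>n. J0 (a0 n) = \<iota>0 n"
    using make_J[OF M0 N0 a0 c0] by blast
  obtain J1 where J1: "Cauchy_continuous_map (metric(UNIV,d1')) C1 J1" "\<And>n. J1 (a1 n) = \<iota>1 n"
    using make_J[OF M1 N1 a1 c1] by blast
  have a0c: "Cauchy_continuous_map (metric(UNIV,d0)) (metric(UNIV,d0')) a0"
    using a0 by (intro iso_Cauchy_cont) (auto simp: dense_isometry_def Metric_space.mdist_metric[OF M0])
  have a1c: "Cauchy_continuous_map (metric(UNIV,d1)) (metric(UNIV,d1')) a1"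
    using a1 by (intro iso_Cauchy_cont) (auto simp: dense_isometry_def Metric_space.mdist_metric[OF M1])
  have cm0: "mcomplete_of C0" and cm1: "mcomplete_of C1" using c0 c1 by (auto simp: is_completion_def)
  obtain F where F: "continuous_map (mtopology_of C0) (mtopology_of C1) F" "\<And>n. F (\<iota>0 n) = (J1 \<circ> g \<circ> a0) n"
    using make_F[OF M0 c0 cm1, of "J1 \<circ> g \<circ> a0"] a0c g1 J1(1) Cauchy_continuous_map_compose by metis
  obtain G where G: "continuous_map (mtopology_of C1) (mtopology_of C0) G" "\<And>n. G (\<iota>1 n) = (J0 \<circ> inv g \<circ> a1) n"
    using make_F[OF M1 c1 cm0, of "J0 \<circ> inv g \<circ> a1"] a1c g2 J0(1) Cauchy_continuous_map_compose by metis
  have J0t: "continuous_map (mtopology_of (metric(UNIV,d0'))) (mtopology_of C0) J0"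
    using J0(1) Cauchy_continuous_imp_continuous_map by blast
  have J1t: "continuous_map (mtopology_of (metric(UNIV,d1'))) (mtopology_of C1) J1"
    using J1(1) Cauchy_continuous_imp_continuous_map by blast
  have gt: "continuous_map (mtopology_of (metric(UNIV,d0'))) (mtopology_of (metric(UNIV,d1'))) g"
    using g1 Cauchy_continuous_imp_continuous_map by blast
  have git: "continuous_map (mtopology_of (metric(UNIV,d1'))) (mtopology_of (metric(UNIV,d0'))) (inv g)"
    using g2 Cauchy_continuous_imp_continuous_map by blast
  have gi1: "\<And>x. inv g (g x) = x" using g by (simp add: bij_is_inj)
  have gi2: "\<And>x. g (inv g x) = x" using g by (simp add: bij_is_surj surj_f_inv_f)
  have A: "(G \<circ> J1) y = (J0 \<circ> inv g) y" for y
  proof (rule dense_eq[of "metric(UNIV,d1')" C0 "G \<circ> J1" "J0 \<circ> inv g" "range a1"])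
    show "continuous_map (mtopology_of (metric(UNIV,d1'))) (mtopology_of C0) (G \<circ> J1)"
      using J1t G(1) continuous_map_compose by blast
    show "continuous_map (mtopology_of (metric(UNIV,d1'))) (mtopology_of C0) (J0 \<circ> inv g)"
      using git J0t continuous_map_compose by blast
    show "mtopology_of (metric(UNIV,d1')) closure_of range a1 = mspace (metric(UNIV,d1'))"
      using a1 by (simp add: dense_isometry_def)
    show "\<And>x. x \<in> range a1 \<Longrightarrow> (G \<circ> J1) x = (J0 \<circ> inv g) x"
      using G(2) J1(2) by auto
  qed simp
  have B: "(F \<circ> J0) y = (J1 \<circ> g) y" for y
  proof (rule dense_eq[of "metric(UNIV,d0')" C1 "F \<circ> J0" "J1 \<circ> g" "range a0"])
    show "continuous_map (mtopology_of (metric(UNIV,d0'))) (mtopology_of C1) (F \<circ> J0)"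
      using J0t F(1) continuous_map_compose by blast
    show "continuous_map (mtopology_of (metric(UNIV,d0'))) (mtopology_of C1) (J1 \<circ> g)"
      using gt J1t continuous_map_compose by blast
    show "mtopology_of (metric(UNIV,d0')) closure_of range a0 = mspace (metric(UNIV,d0'))"
      using a0 by (simp add: dense_isometry_def)
    show "\<And>x. x \<in> range a0 \<Longrightarrow> (F \<circ> J0) x = (J1 \<circ> g) x"
      using F(2) J0(2) by auto
  qed simp
  have GF: "(G \<circ> F) x = id x" if "x \<in> mspace C0" for x
  proof (rule dense_eq[of C0 C0 "G \<circ> F" id "range \<iota>0"])
    show "continuous_map (mtopology_of C0) (mtopology_of C0) (G \<circ> F)"
      using F(1) G(1) continuous_map_compose by blast
    show "mtopology_of C0 closure_of range \<iota>0 = mspace C0"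
      using c0 by (simp add: is_completion_def dense_isometry_def)
    show "\<And>x. x \<in> range \<iota>0 \<Longrightarrow> (G \<circ> F) x = id x"
      using F(2) J0(2) A gi1 by (auto simp: comp_def)
  qed (auto simp: that)
  have FG: "(F \<circ> G) x = id x" if "x \<in> mspace C1" for x
  proof (rule dense_eq[of C1 C1 "F \<circ> G" id "range \<iota>1"])
    show "continuous_map (mtopology_of C1) (mtopology_of C1) (F \<circ> G)"
      using F(1) G(1) continuous_map_compose by blast
    show "mtopology_of C1 closure_of range \<iota>1 = mspace C1"
      using c1 by (simp add: is_completion_def dense_isometry_def)
    show "\<And>x. x \<in> range \<iota>1 \<Longrightarrow> (F \<circ> G) x = id x"
      using G(2) J1(2) B gi2 by (auto simp: comp_def)
  qed (auto simp: that)
  have "homeomorphic_maps (mtopology_of C0) (mtopology_of C1) F G"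
    unfolding homeomorphic_maps_def using F(1) G(1) GF FG by auto
  then show ?thesis by (rule homeomorphic_maps_imp_homeomorphic_space)
qed


lemma forward:
  assumes M0: "Metric_space UNIV d0" and M1: "Metric_space UNIV d1"
    and c0: "is_completion d0 C0 \<iota>0" and c1: "is_completion d1 C1 \<iota>1"
    and hom: "mtopology_of C0 homeomorphic_space mtopology_of C1"
  shows "\<exists>d0' d1'. metric_on_nat d0' \<and> metric_on_nat d1' \<and> di_le d0 d0' \<and> di_le d1 d1' \<and>
       (\<exists>g. bij g \<and>
          Cauchy_continuous_map (metric (UNIV, d0')) (metric (UNIV, d1')) g \<and>
          Cauchy_continuous_map (metric (UNIV, d1')) (metric (UNIV, d0')) (inv g))"
proof -
  obtain h k where hk: "homeomorphic_maps (mtopology_of C0) (mtopology_of C1) h k"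
    using hom homeomorphic_space_def by blast
  have hc: "continuous_map (mtopology_of C0) (mtopology_of C1) h"
    and kc: "continuous_map (mtopology_of C1) (mtopology_of C0) k"
    and kh: "\<And>x. x \<in> mspace C0 \<Longrightarrow> k (h x) = x"
    and hk': "\<And>y. y \<in> mspace C1 \<Longrightarrow> h (k y) = y"
    using hk by (auto simp: homeomorphic_maps_def)
  have hm: "\<And>x. x \<in> mspace C0 \<Longrightarrow> h x \<in> mspace C1"
    using hc by (metis continuous_map_def topspace_mtopology_of Pi_iff)
  have km: "\<And>x. x \<in> mspace C1 \<Longrightarrow> k x \<in> mspace C0"
    using kc by (metis continuous_map_def topspace_mtopology_of Pi_iff)
  have di0: "dense_isometry d0 C0 \<iota>0" and di1: "dense_isometry d1 C1 \<iota>1"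
    and cm0: "mcomplete_of C0" and cm1: "mcomplete_of C1"
    using c0 c1 by (auto simp: is_completion_def)
  have r0: "range \<iota>0 \<subseteq> mspace C0" and r1: "range \<iota>1 \<subseteq> mspace C1"
    using di0 di1 by (auto simp: dense_isometry_def)
  define D where "D = range \<iota>0 \<union> k ` range \<iota>1"
  have DC: "D \<subseteq> mspace C0" using r0 r1 km by (auto simp: D_def)
  have "countable D" by (simp add: D_def)
  moreover have "infinite D"
  proof
    assume "finite D"
    then have "finite (range \<iota>0)" by (simp add: D_def)
    then show False using di_inj[OF M0 di0] by (simp add: finite_image_iff)
  qed
  ultimately obtain e :: "nat \<Rightarrow> 'a" where e: "bij_betw e UNIV D"
    using countable_infiniteE' by blast
  have einj: "inj e" and erange: "range e = D" using e by (auto simp: bij_betw_def)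
  define ei where "ei = inv_into UNIV e"
  have eei: "\<And>z. z \<in> D \<Longrightarrow> e (ei z) = z" unfolding ei_def using erange by (metis f_inv_into_f)
  have em: "\<And>x. e x \<in> mspace C0" using erange DC by auto
  define d0' where "d0' = (\<lambda>x y. mdist C0 (e x) (e y))"
  define d1' where "d1' = (\<lambda>x y. mdist C1 (h (e x)) (h (e y)))"
  have N0: "Metric_space UNIV d0'" unfolding d0'_def
    using pullback_metric[OF einj] erange DC by blast
  have hinj: "inj (h \<circ> e)"
  proof
    fix x y assume "(h \<circ> e) x = (h \<circ> e) y"
    then have "k (h (e x)) = k (h (e y))" by simp
    then show "x = y" using kh em einj by (simp add: inj_eq)
  qed
  have N1: "Metric_space UNIV d1'" unfolding d1'_def
    using pullback_metric[OF hinj, of C1] hm em by (auto simp: comp_def)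
  interpret N0: Metric_space UNIV d0' by (fact N0)
  interpret N1: Metric_space UNIV d1' by (fact N1)
  have cl0: "x \<in> mspace C0 \<Longrightarrow> r > 0 \<Longrightarrow> \<exists>a. mdist C0 x (\<iota>0 a) < r" for x r
    using di0 closure_metric[of C0 "range \<iota>0"] unfolding dense_isometry_def by blast
  have cl1: "x \<in> mspace C1 \<Longrightarrow> r > 0 \<Longrightarrow> \<exists>a. mdist C1 x (\<iota>1 a) < r" for x r
    using di1 closure_metric[of C1 "range \<iota>1"] unfolding dense_isometry_def by blast
  have dl0: "di_le d0 d0'"
    unfolding di_le_def dense_isometry_def
  proof (intro exI[of _ "ei \<circ> \<iota>0"] conjI allI)
    fix a b show "mdist (metric (UNIV, d0')) ((ei \<circ> \<iota>0) a) ((ei \<circ> \<iota>0) b) = d0 a b"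
      using eei di0 by (simp only: N0.mdist_metric) (simp add: d0'_def D_def dense_isometry_def)
  next
    show "mtopology_of (metric (UNIV, d0')) closure_of range (ei \<circ> \<iota>0) = mspace (metric (UNIV, d0'))"
      unfolding closure_metric
    proof (auto)
      fix x and r :: real assume "r > 0"
      then obtain a where "mdist C0 (e x) (\<iota>0 a) < r" using cl0 em by blast
      then show "\<exists>y. d0' x (ei (\<iota>0 y)) < r" using eei by (auto simp: d0'_def D_def)
    qed
  qed simp
  have dl1: "di_le d1 d1'"
    unfolding di_le_def dense_isometry_def
  proof (intro exI[of _ "ei \<circ> k \<circ> \<iota>1"] conjI allI)
    fix a b show "mdist (metric (UNIV, d1')) ((ei \<circ> k \<circ> \<iota>1) a) ((ei \<circ> k \<circ> \<iota>1) b) = d1 a b"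
  proof -
      have "\<iota>1 a \<in> mspace C1" "\<iota>1 b \<in> mspace C1" using r1 by auto
      then show ?thesis
        using eei di1 hk' by (simp only: N1.mdist_metric) (simp add: d1'_def D_def dense_isometry_def)
    qed
  next
    show "mtopology_of (metric (UNIV, d1')) closure_of range (ei \<circ> k \<circ> \<iota>1) = mspace (metric (UNIV, d1'))"
      unfolding closure_metric
    proof (auto)
      fix x and r :: real assume "r > 0"
      then obtain a where "mdist C1 (h (e x)) (\<iota>1 a) < r" using cl1 em hm by blast
      moreover have "h (k (\<iota>1 a)) = \<iota>1 a" using hk' r1 by auto
      ultimately have "d1' x (ei (k (\<iota>1 a))) < r" using eei by (auto simp: d1'_def D_def)
      then show "\<exists>y. d1' x (ei (k (\<iota>1 y))) < r" by blast
    qed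
  qed simp
  have hcc: "Cauchy_continuous_map C0 C1 h"
    using continuous_imp_Cauchy_continuous_map cm0 hc by (metis mcomplete_of_def)
  have kcc: "Cauchy_continuous_map C1 C0 k"
    using continuous_imp_Cauchy_continuous_map cm1 kc by (metis mcomplete_of_def)
  have eq0: "MC (metric(UNIV,d0')) \<sigma> \<longleftrightarrow> MC C0 (e \<circ> \<sigma>)" for \<sigma>
    by (rule iso_MCauchy) (simp_all only: N0.mdist_metric N0.mspace_metric, auto simp: em d0'_def)
  have eq1: "MC (metric(UNIV,d1')) \<sigma> \<longleftrightarrow> MC C1 ((h \<circ> e) \<circ> \<sigma>)" for \<sigma>
    by (rule iso_MCauchy) (simp_all only: N1.mdist_metric N1.mspace_metric, auto simp: em hm d1'_def)
  have g1: "Cauchy_continuous_map (metric (UNIV, d0')) (metric (UNIV, d1')) id"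
    unfolding Cauchy_continuous_map_def
  proof (intro allI impI)
    fix \<sigma> assume "MC (metric(UNIV,d0')) \<sigma>"
    then have "MC C0 (e \<circ> \<sigma>)" using eq0 by blast
    then have "MC C1 (h \<circ> (e \<circ> \<sigma>))" using hcc by (simp add: Cauchy_continuous_map_def)
    then show "MC (metric(UNIV,d1')) (id \<circ> \<sigma>)" using eq1 by (simp add: comp_assoc)
  qed
  have g2: "Cauchy_continuous_map (metric (UNIV, d1')) (metric (UNIV, d0')) id"
    unfolding Cauchy_continuous_map_def
  proof (intro allI impI)
    fix \<sigma> assume "MC (metric(UNIV,d1')) \<sigma>"
    then have "MC C1 (h \<circ> e \<circ> \<sigma>)" using eq1 by blast
    then have "MC C0 (k \<circ> (h \<circ> e \<circ> \<sigma>))" using kcc by (simp add: Cauchy_continuous_map_def)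
    moreover have "k \<circ> (h \<circ> e \<circ> \<sigma>) = e \<circ> \<sigma>" using kh em by (auto simp: comp_def)
    ultimately show "MC (metric(UNIV,d0')) (id \<circ> \<sigma>)" using eq0 by simp
  qed
  show ?thesis
    using N0 N1 dl0 dl1 g1 g2 unfolding metric_on_nat_def
    by (intro exI[of _ d0'] exI[of _ d1'] conjI exI[of _ id]) (auto simp: inv_id)
qed


theorem theorem4p7:
  fixes d0 d1 :: "nat \<Rightarrow> nat \<Rightarrow> real"
    and C0 :: "'a metric" and \<iota>0 :: "nat \<Rightarrow> 'a"
    and C1 :: "'b metric" and \<iota>1 :: "nat \<Rightarrow> 'b"
  assumes "metric_on_nat d0" and "metric_on_nat d1"
    and "is_completion d0 C0 \<iota>0" and "is_completion d1 C1 \<iota>1"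
  shows "(mtopology_of C0 homeomorphic_space mtopology_of C1) \<longleftrightarrow>
    (\<exists>d0' d1'. metric_on_nat d0' \<and> metric_on_nat d1' \<and> di_le d0 d0' \<and> di_le d1 d1' \<and>
       (\<exists>g. bij g \<and>
          Cauchy_continuous_map (metric (UNIV, d0')) (metric (UNIV, d1')) g \<and>
          Cauchy_continuous_map (metric (UNIV, d1')) (metric (UNIV, d0')) (inv g)))"
    using forward[OF assms(1,2)[unfolded metric_on_nat_def] assms(3,4)]
    backward[OF assms(1,2)[unfolded metric_on_nat_def] assms(3,4)]
  unfolding metric_on_nat_def di_le_def by blast

end
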